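(* Let $\rho^{AB}=\frac14\big(\mathbb{I}\otimes\mathbb{I}+\vec x\cdot\vec\sigma\otimes\mathbb{I}+\mathbb{I}\otimes\vec y\cdot\vec\sigma+\sum_{i=1}^3 t_i\,\sigma_i\otimes\sigma_i\big)$ be a two-qubit density matrix, where $\vec x,\vec y\in\mathbb{R}^3$ and $T=\mathrm{diag}\{t_1,t_2,t_3\}$. Let $\mathcal R=\mathrm{span}\{T^t\vec x,\vec y\}\subseteq\mathbb{R}^3$, let $\mathcal R^\perp$ be its orthogonal complement, let $x=|\vec x|$, and let $$t_0^2=\max_{\hat e_0\in\mathcal R^\perp,\ |\hat e_0|=1}\hat e_0^{\,t}T^tT\hat e_0.$$ Then $$\min_{\{\Pi_k^B\}}S(\rho^A|\{\Pi_k^B\})\le h_2\!\left(\frac{1+\sqrt{x^2+t_0^2}}{2}\right),$$ where the minimum is over all von Neumann (projective) measurements $\{\Pi_k^B\}$ on qubit $B$. Consequently $$C(\rho^{AB})\ge S(\rho^A)-h_2\!\left(\frac{1+\sqrt{x^2+t_0^2}}{2}\right),\qquad Q(\rho^{AB})\le S(\rho^B)-S(\rho^{AB})+h_2\!\left(\frac{1+\sqrt{x^2+t_0^2}}{2}\right).$$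
   Context: $\sigma_i$ are the Pauli matrices, $\vec a\cdot\vec\sigma=\sum_i a_i\sigma_i$; $\rho^A,\rho^B$ are the reduced states and $S(\rho)=-\mathrm{Tr}(\rho\log_2\rho)$. A von Neumann measurement on $B$ is $\Pi_k^B=\frac12(\mathbb{I}\pm\hat n\cdot\vec\sigma)$ ($k=0,1$) for a unit vector $\hat n$; $p_k=\mathrm{Tr}[(\mathbb{I}\otimes\Pi_k^B)\rho^{AB}(\mathbb{I}\otimes\Pi_k^B)]$, $\rho^A_k=\mathrm{Tr}_B[(\mathbb{I}\otimes\Pi_k^B)\rho^{AB}(\mathbb{I}\otimes\Pi_k^B)]/p_k$, and $S(\rho^A|\{\Pi_k^B\})=\sum_kp_kS(\rho^A_k)$. The classical correlation is $C(\rho^{AB})=\sup_{\{\Pi_k^B\}}\{S(\rho^A)-S(\rho^A|\{\Pi_k^B\})\}$ (supremum over von Neumann measurements on $B$), the mutual information is $I(\rho^{AB})=S(\rho^A)+S(\rho^B)-S(\rho^{AB})$, and the quantum discord is $Q(\rho^{AB})=I(\rho^{AB})-C(\rho^{AB})$. $h_2(x)=-x\log_2x-(1-x)\log_2(1-x)$. *)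

theory Defs
  imports "Jordan_Normal_Form.Char_Poly" "HOL-Computational_Algebra.Polynomial"
begin

(* 3-vectors of reals are represented as functions nat => real; only the
   components 1,2,3 are meaningful. *)

definition norm3 :: "(nat \<Rightarrow> real) \<Rightarrow> real" where
  "norm3 a = sqrt (\<Sum>i\<in>{1..3}. (a i)^2)"

definition dot3 :: "(nat \<Rightarrow> real) \<Rightarrow> (nat \<Rightarrow> real) \<Rightarrow> real" where
  "dot3 a b = (\<Sum>i\<in>{1..3}. a i * b i)"

definition unit3 :: "(nat \<Rightarrow> real) set" where
  "unit3 = {n. (\<Sum>i\<in>{1..3}. (n i)^2) = 1}"

definition pauli :: "nat \<Rightarrow> complex mat" where
  "pauli i = (if i = 1 then mat_of_rows_list 2 [[0, 1], [1, 0]]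
              else if i = 2 then mat_of_rows_list 2 [[0, -\<i>], [\<i>, 0]]
              else mat_of_rows_list 2 [[1, 0], [0, -1]])"

definition dot_sigma :: "(nat \<Rightarrow> real) \<Rightarrow> complex mat" where
  "dot_sigma a = complex_of_real (a 1) \<cdot>\<^sub>m pauli 1 + complex_of_real (a 2) \<cdot>\<^sub>m pauli 2
                 + complex_of_real (a 3) \<cdot>\<^sub>m pauli 3"

definition kron :: "complex mat \<Rightarrow> complex mat \<Rightarrow> complex mat" where
  "kron A B = mat (dim_row A * dim_row B) (dim_col A * dim_col B)
     (\<lambda>(i, j). A $$ (i div dim_row B, j div dim_col B) * B $$ (i mod dim_row B, j mod dim_col B))"

definition I2 :: "complex mat" where "I2 = one_mat 2"

definition rho_AB :: "(nat \<Rightarrow> real) \<Rightarrow> (nat \<Rightarrow> real) \<Rightarrow> (nat \<Rightarrow> real) \<Rightarrow> complex mat" where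
  "rho_AB x y t = (1/4 :: complex) \<cdot>\<^sub>m
     (kron I2 I2 + kron (dot_sigma x) I2 + kron I2 (dot_sigma y)
      + complex_of_real (t 1) \<cdot>\<^sub>m kron (pauli 1) (pauli 1)
      + complex_of_real (t 2) \<cdot>\<^sub>m kron (pauli 2) (pauli 2)
      + complex_of_real (t 3) \<cdot>\<^sub>m kron (pauli 3) (pauli 3))"

definition psd :: "complex mat \<Rightarrow> bool" where
  "psd A \<longleftrightarrow> (\<forall>v :: nat \<Rightarrow> complex.
      0 \<le> Re (\<Sum>i<dim_row A. \<Sum>j<dim_col A. cnj (v i) * A $$ (i, j) * v j))"

definition ptrace_B :: "complex mat \<Rightarrow> complex mat" where
  "ptrace_B M = mat 2 2 (\<lambda>(i, j). M $$ (2*i, 2*j) + M $$ (2*i+1, 2*j+1))"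

definition ptrace_A :: "complex mat \<Rightarrow> complex mat" where
  "ptrace_A M = mat 2 2 (\<lambda>(k, l). M $$ (k, l) + M $$ (2+k, 2+l))"

(* von Neumann entropy S(rho) = - Tr(rho log2 rho), computed from the eigenvalues
   (roots of the characteristic polynomial, with multiplicity), 0 log 0 = 0 *)
definition eta :: "real \<Rightarrow> real" where
  "eta p = (if p \<le> 0 then 0 else p * log 2 p)"

definition vN_entropy :: "complex mat \<Rightarrow> real" where
  "vN_entropy \<rho> = - (\<Sum>l\<in>#proots (char_poly \<rho>). eta (Re l))"

definition h2 :: "real \<Rightarrow> real" where
  "h2 p = - p * log 2 p - (1 - p) * log 2 (1 - p)"

definition proj_B :: "(nat \<Rightarrow> real) \<Rightarrow> nat \<Rightarrow> complex mat" where
  "proj_B n k = (1/2 :: complex) \<cdot>\<^sub>m (I2 + (if k = 0 then 1 else -1 :: complex) \<cdot>\<^sub>m dot_sigma n)"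

definition post_meas :: "complex mat \<Rightarrow> (nat \<Rightarrow> real) \<Rightarrow> nat \<Rightarrow> complex mat" where
  "post_meas \<rho> n k = kron I2 (proj_B n k) * \<rho> * kron I2 (proj_B n k)"

definition mtrace :: "complex mat \<Rightarrow> complex" where
  "mtrace M = (\<Sum>i<dim_row M. M $$ (i, i))"

definition meas_prob :: "complex mat \<Rightarrow> (nat \<Rightarrow> real) \<Rightarrow> nat \<Rightarrow> real" where
  "meas_prob \<rho> n k = Re (mtrace (post_meas \<rho> n k))"

definition cond_state_A :: "complex mat \<Rightarrow> (nat \<Rightarrow> real) \<Rightarrow> nat \<Rightarrow> complex mat" where
  "cond_state_A \<rho> n k = (1 / complex_of_real (meas_prob \<rho> n k)) \<cdot>\<^sub>m ptrace_B (post_meas \<rho> n k)"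

definition cond_entropy :: "complex mat \<Rightarrow> (nat \<Rightarrow> real) \<Rightarrow> real" where
  "cond_entropy \<rho> n = (\<Sum>k\<in>{0,1}. meas_prob \<rho> n k * vN_entropy (cond_state_A \<rho> n k))"

definition classical_corr :: "complex mat \<Rightarrow> real" where
  "classical_corr \<rho> = (SUP n\<in>unit3. vN_entropy (ptrace_B \<rho>) - cond_entropy \<rho> n)"

definition mutual_info :: "complex mat \<Rightarrow> real" where
  "mutual_info \<rho> = vN_entropy (ptrace_B \<rho>) + vN_entropy (ptrace_A \<rho>) - vN_entropy \<rho>"

definition discord :: "complex mat \<Rightarrow> real" where
  "discord \<rho> = mutual_info \<rho> - classical_corr \<rho>"

(* t_0^2 = max over unit e_0 in R^perp, R = span{T^t x, y}, of e_0^t T^t T e_0, T = diag t *)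
definition t0_sq :: "(nat \<Rightarrow> real) \<Rightarrow> (nat \<Rightarrow> real) \<Rightarrow> (nat \<Rightarrow> real) \<Rightarrow> real" where
  "t0_sq x y t = (SUP e\<in>{e \<in> unit3. dot3 e (\<lambda>i. t i * x i) = 0 \<and> dot3 e y = 0}.
                    (\<Sum>i\<in>{1..3}. (t i)^2 * (e i)^2))"

end

theory Submission
  imports Defs "HOL-Analysis.Linear_Algebra" "HOL-Analysis.Elementary_Metric_Spaces"
begin


lemma kron_dims[simp]: "dim_row (kron A B) = dim_row A * dim_row B" "dim_col (kron A B) = dim_col A * dim_col B"
  by (auto simp: kron_def)

lemma I2_simps[simp]: "dim_row I2 = 2" "dim_col I2 = 2" by (auto simp: I2_def)

lemma sum4: "(\<Sum>k<4::nat. f k) = f 0 + f 1 + f 2 + (f 3 :: 'a::comm_monoid_add)"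
  by (simp add: eval_nat_numeral add.assoc)
lemma sum2: "(\<Sum>k<2::nat. f k) = f 0 + (f 1 :: 'a::comm_monoid_add)"
  by (simp add: eval_nat_numeral)
lemma sum4': "(\<Sum>k=0..<4::nat. f k) = f 0 + f 1 + f 2 + (f 3 :: 'a::comm_monoid_add)"
  by (simp add: eval_nat_numeral add.assoc)
lemma sum2': "(\<Sum>k=0..<2::nat. f k) = f 0 + (f 1 :: 'a::comm_monoid_add)"
  by (simp add: eval_nat_numeral)

lemma KIP: assumes "P \<in> carrier_mat 2 2" "a < 4" "b < 4"
  shows "kron I2 P $$ (a,b) = (if a div 2 = b div 2 then P $$ (a mod 2, b mod 2) else 0)"
  using assms by (auto simp: kron_def I2_def)

lemma ptrace_post: assumes M: "M \<in> carrier_mat 4 4" and P: "P \<in> carrier_mat 2 2" 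
  and PP: "P * P = P" and i: "i < 2" and j: "j < 2"
  shows "ptrace_B (kron I2 P * M * kron I2 P) $$ (i,j) = 
     (\<Sum>b<2. \<Sum>b'<2. M$$(2*i+b, 2*j+b') * P$$(b',b))"
proof -
  have pp: "P$$(a,0)*P$$(0,c) + P$$(a,1)*P$$(1,c) = P$$(a,c)" if "a<2" "c<2" for a c
  proof -
    have "(P*P)$$(a,c) = P$$(a,c)" using PP by simp
    thus ?thesis using P that by (simp add: scalar_prod_def sum2' row_def col_def)
  qed
  have e: "(kron I2 P * M * kron I2 P) $$ (a,c) = (\<Sum>k<4. \<Sum>l<4. kron I2 P $$ (a,k) * M $$ (k,l) * kron I2 P $$ (l,c))"
    if "a<4" "c<4" for a c
    using that M P apply (simp add: scalar_prod_def sum_distrib_left sum_distrib_right mult.assoc lessThan_atLeast0)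
    by (rule sum.swap)
  have ij: "(i = 0 \<or> i = 1) \<and> (j = 0 \<or> j = 1)" using i j by auto
  have P00: "P$$(0,0)*P$$(0,0) + P$$(0,1)*P$$(1,0) = P$$(0,0)" using pp[of 0 0] by simp
  have P01: "P$$(0,0)*P$$(0,1) + P$$(0,1)*P$$(1,1) = P$$(0,1)" using pp[of 0 1] by simp
  have P10: "P$$(1,0)*P$$(0,0) + P$$(1,1)*P$$(1,0) = P$$(1,0)" using pp[of 1 0] by simp
  have P11: "P$$(1,0)*P$$(0,1) + P$$(1,1)*P$$(1,1) = P$$(1,1)" using pp[of 1 1] by simp
  have "ptrace_B (kron I2 P * M * kron I2 P) $$ (i,j) = (kron I2 P * M * kron I2 P)$$(2*i,2*j) + (kron I2 P * M * kron I2 P)$$(2*i+1,2*j+1)"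
    using i j by (simp add: ptrace_B_def)
  also have "... = (\<Sum>k=0..<4. \<Sum>l=0..<4. kron I2 P $$ (2*i,k) * M $$ (k,l) * kron I2 P $$ (l,2*j))
     + (\<Sum>k=0..<4. \<Sum>l=0..<4. kron I2 P $$ (2*i+1,k) * M $$ (k,l) * kron I2 P $$ (l,2*j+1))"
    using i j by (simp add: e lessThan_atLeast0)
  also have "... = (\<Sum>b<2. \<Sum>b'<2. M$$(2*i+b, 2*j+b') * (P$$(b',0)*P$$(0,b) + P$$(b',1)*P$$(1,b)))"
    using ij P
    apply (simp only: sum4' sum4 sum2)
    apply (elim disjE conjE)
    apply (simp_all add: KIP)
    apply (simp_all add: algebra_simps)
    done
  also have "... = (\<Sum>b<2. \<Sum>b'<2. M$$(2*i+b, 2*j+b') * P$$(b',b))"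
    using pp[simplified] by (intro sum.cong refl) auto
  finally show ?thesis .
qed


lemma pauli_carrier[simp]: "pauli i \<in> carrier_mat 2 2"
  unfolding pauli_def mat_of_rows_list_def by (simp add: numeral_2_eq_2)
lemma pauli_dims[simp]: "dim_row (pauli i) = 2" "dim_col (pauli i) = 2"
  by (simp_all add: pauli_def mat_of_rows_list_def)

lemma pauli1: "pauli 1 $$ (0,0) = 0" "pauli 1 $$ (0,1) = 1" "pauli 1 $$ (1,0) = 1" "pauli 1 $$ (1,1) = 0"
  by (simp_all add: pauli_def mat_of_rows_list_def)
lemma pauli2: "pauli 2 $$ (0,0) = 0" "pauli 2 $$ (0,1) = -\<i>" "pauli 2 $$ (1,0) = \<i>" "pauli 2 $$ (1,1) = 0"
  by (simp_all add: pauli_def mat_of_rows_list_def)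
lemma pauli3: "pauli 3 $$ (0,0) = 1" "pauli 3 $$ (0,1) = 0" "pauli 3 $$ (1,0) = 0" "pauli 3 $$ (1,1) = -1"
  by (simp_all add: pauli_def mat_of_rows_list_def)

lemma ds_carrier[simp]: "dot_sigma a \<in> carrier_mat 2 2"
  by (simp add: dot_sigma_def)
lemma ds_dims[simp]: "dim_row (dot_sigma a) = 2" "dim_col (dot_sigma a) = 2"
  by (simp_all add: dot_sigma_def)

lemma ds_entries: "dot_sigma a $$ (0,0) = complex_of_real (a 3)"
  "dot_sigma a $$ (0,1) = complex_of_real (a 1) - \<i> * complex_of_real (a 2)"
  "dot_sigma a $$ (1,0) = complex_of_real (a 1) + \<i> * complex_of_real (a 2)"
  "dot_sigma a $$ (1,1) = - complex_of_real (a 3)"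
  by (simp_all add: dot_sigma_def pauli1 pauli2 pauli3 pauli1[simplified] pauli2[simplified] pauli3[simplified] algebra_simps)

lemma kron_carrier: assumes "A \<in> carrier_mat 2 2" "B \<in> carrier_mat 2 2" shows "kron A B \<in> carrier_mat 4 4"
proof (rule carrier_matI)
  show "dim_row (kron A B) = 4" using carrier_matD[OF assms(1)] carrier_matD[OF assms(2)] by simp
  show "dim_col (kron A B) = 4" using carrier_matD[OF assms(1)] carrier_matD[OF assms(2)] by simp
qed

lemma I2_carrier[simp]: "I2 \<in> carrier_mat 2 2" by (simp add: I2_def)

lemma rho_carrier[simp]: "rho_AB x y t \<in> carrier_mat 4 4"
  unfolding rho_AB_def
  by (intro smult_carrier_mat add_carrier_mat kron_carrier I2_carrier ds_carrier pauli_carrier)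

lemma proj_carrier[simp]: "proj_B n k \<in> carrier_mat 2 2"
  unfolding proj_B_def by (intro smult_carrier_mat add_carrier_mat I2_carrier ds_carrier)

lemma I2_entries: "I2 $$ (0,0) = 1" "I2 $$ (0,1) = 0" "I2 $$ (1,0) = 0" "I2 $$ (1,1) = 1"
  by (simp_all add: I2_def)

lemma proj_dims[simp]: "dim_row (proj_B n k) = 2" "dim_col (proj_B n k) = 2"
  by (simp_all add: proj_B_def I2_def)

lemma mat2_eq: assumes "A \<in> carrier_mat 2 2" "B \<in> carrier_mat 2 2"
  "A$$(0,0) = B$$(0,0)" "A$$(0,1) = B$$(0,1)" "A$$(1,0) = B$$(1,0)" "A$$(1,1) = B$$(1,1)"
  shows "A = B"
proof (rule eq_matI)
  fix i j assume "i < dim_row B" "j < dim_col B"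
  then have "(i = 0 \<or> i = 1) \<and> (j = 0 \<or> j = 1)" using assms by auto
  then show "A $$ (i, j) = B $$ (i, j)" using assms by auto
qed (use assms in auto)

lemma mult2: assumes "A \<in> carrier_mat 2 2" "B \<in> carrier_mat 2 2"
  shows "(A*B)$$(0,0) = A$$(0,0)*B$$(0,0) + A$$(0,1)*B$$(1,0)"
   "(A*B)$$(0,1) = A$$(0,0)*B$$(0,1) + A$$(0,1)*B$$(1,1)"
   "(A*B)$$(1,0) = A$$(1,0)*B$$(0,0) + A$$(1,1)*B$$(1,0)"
   "(A*B)$$(1,1) = A$$(1,0)*B$$(0,1) + A$$(1,1)*B$$(1,1)"
  using assms by (simp_all add: scalar_prod_def sum2')

lemma proj_entries: 
  "proj_B n k $$ (0,0) = (1 + (if k = 0 then 1 else -1) * complex_of_real (n 3))/2"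
  "proj_B n k $$ (0,1) = (if k = 0 then 1 else -1) * (complex_of_real (n 1) - \<i> * complex_of_real (n 2))/2"
  "proj_B n k $$ (1,0) = (if k = 0 then 1 else -1) * (complex_of_real (n 1) + \<i> * complex_of_real (n 2))/2"
  "proj_B n k $$ (1,1) = (1 - (if k = 0 then 1 else -1) * complex_of_real (n 3))/2"
proof -
  have e: "proj_B n k $$ (i,j) = 1/2 * (I2$$(i,j) + (if k = 0 then 1 else -1) * dot_sigma n $$ (i,j))"
    if "i < 2" "j < 2" for i j
    unfolding proj_B_def using that by simp
  show "proj_B n k $$ (0,0) = (1 + (if k = 0 then 1 else -1) * complex_of_real (n 3))/2"
    by (subst e) (simp_all add: ds_entries I2_entries ds_entries[simplified] I2_entries[simplified])
  show "proj_B n k $$ (0,1) = (if k = 0 then 1 else -1) * (complex_of_real (n 1) - \<i> * complex_of_real (n 2))/2"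
    by (subst e) (simp_all add: ds_entries I2_entries ds_entries[simplified] I2_entries[simplified])
  show "proj_B n k $$ (1,0) = (if k = 0 then 1 else -1) * (complex_of_real (n 1) + \<i> * complex_of_real (n 2))/2"
    by (subst e) (simp_all add: ds_entries I2_entries ds_entries[simplified] I2_entries[simplified])
  show "proj_B n k $$ (1,1) = (1 - (if k = 0 then 1 else -1) * complex_of_real (n 3))/2"
    by (subst e) (simp_all add: ds_entries I2_entries ds_entries[simplified] I2_entries[simplified])
qed

lemma idem_alg:
  fixes a b d c :: complex
  assumes c: "c*c = 1" and u: "a^2+b^2+d^2 = 1"
  shows "(1 + c*d)/2 * ((1 + c*d)/2) + c*(a - \<i>*b)/2 * (c*(a + \<i>*b)/2) = (1 + c*d)/2"
    "(1 + c*d)/2 * (c*(a - \<i>*b)/2) + c*(a - \<i>*b)/2 * ((1 - c*d)/2) = c*(a - \<i>*b)/2"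
    "c*(a + \<i>*b)/2 * ((1 + c*d)/2) + (1 - c*d)/2 * (c*(a + \<i>*b)/2) = c*(a + \<i>*b)/2"
    "c*(a + \<i>*b)/2 * (c*(a - \<i>*b)/2) + (1 - c*d)/2 * ((1 - c*d)/2) = (1 - c*d)/2"
proof -
  have p: "(a - \<i>*b) * (a + \<i>*b) = a^2 + b^2"
    by (simp add: algebra_simps power2_eq_square)
  have u2: "2 * a^2 + (2 * b^2 + 2 * d^2) = 2"
    by (metis u add.assoc distrib_left mult.right_neutral)
  have "(1 + c*d)/2 * ((1 + c*d)/2) + c*(a - \<i>*b)/2 * (c*(a + \<i>*b)/2)
     = (1 + 2*c*d + (c*c)*d^2 + (c*c)*((a - \<i>*b) * (a + \<i>*b)))/4"
    by (simp add: field_simps power2_eq_square)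
  also have "... = (1 + c*d)/2" using c u p u2 by (simp add: field_simps; simp add: algebra_simps)
  finally show "(1 + c*d)/2 * ((1 + c*d)/2) + c*(a - \<i>*b)/2 * (c*(a + \<i>*b)/2) = (1 + c*d)/2" .
  show "(1 + c*d)/2 * (c*(a - \<i>*b)/2) + c*(a - \<i>*b)/2 * ((1 - c*d)/2) = c*(a - \<i>*b)/2"
    by (simp add: field_simps)
  show "c*(a + \<i>*b)/2 * ((1 + c*d)/2) + (1 - c*d)/2 * (c*(a + \<i>*b)/2) = c*(a + \<i>*b)/2"
    by (simp add: field_simps)
  have "c*(a + \<i>*b)/2 * (c*(a - \<i>*b)/2) + (1 - c*d)/2 * ((1 - c*d)/2)
     = (1 - 2*c*d + (c*c)*d^2 + (c*c)*((a - \<i>*b) * (a + \<i>*b)))/4"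
    by (simp add: field_simps power2_eq_square)
  also have "... = (1 - c*d)/2" using c u p u2 by (simp add: field_simps; simp add: algebra_simps)
  finally show "c*(a + \<i>*b)/2 * (c*(a - \<i>*b)/2) + (1 - c*d)/2 * ((1 - c*d)/2) = (1 - c*d)/2" .
qed

lemma proj_idem: assumes "n \<in> unit3" shows "proj_B n k * proj_B n k = proj_B n k"
proof -
  have u: "(n 1)^2 + (n 2)^2 + (n 3)^2 = 1" using assms by (simp add: unit3_def numeral_3_eq_3 eval_nat_numeral)
  have u': "complex_of_real (n 1) ^2 + complex_of_real (n 2)^2 + complex_of_real (n 3)^2 = 1"
    using arg_cong[OF u, of complex_of_real] by simp
  show ?thesis
    apply (rule mat2_eq)
    apply (rule mult_carrier_mat[OF proj_carrier proj_carrier])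
    apply (rule proj_carrier)
    apply (simp_all only: mult2[OF proj_carrier proj_carrier] proj_entries)
    using idem_alg[of "(if k = 0 then 1 else -1)" "complex_of_real (n 1)" "complex_of_real (n 2)" "complex_of_real (n 3)"] u'
    by (auto simp del: of_real_power)
qed


lemma post_carrier[simp]: "post_meas (rho_AB x y t) n k \<in> carrier_mat 4 4"
  unfolding post_meas_def
  by (rule mult_carrier_mat[OF mult_carrier_mat[OF kron_carrier[OF I2_carrier proj_carrier] rho_carrier] kron_carrier[OF I2_carrier proj_carrier]])

lemma ptr_rho: assumes "n \<in> unit3" "i < 2" "j < 2"
  shows "ptrace_B (post_meas (rho_AB x y t) n k) $$ (i,j) = 
     (\<Sum>b<2. \<Sum>b'<2. rho_AB x y t $$(2*i+b, 2*j+b') * proj_B n k $$(b',b))"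
  unfolding post_meas_def
  by (rule ptrace_post[OF rho_carrier proj_carrier proj_idem[OF assms(1)] assms(2,3)])

lemma rho_entry: assumes "p < 4" "q < 4"
  shows "rho_AB x y t $$ (p,q) = 1/4 * (
    I2 $$ (p div 2, q div 2) * I2 $$ (p mod 2, q mod 2)
  + dot_sigma x $$ (p div 2, q div 2) * I2 $$ (p mod 2, q mod 2)
  + I2 $$ (p div 2, q div 2) * dot_sigma y $$ (p mod 2, q mod 2)
  + complex_of_real (t 1) * (pauli 1 $$ (p div 2, q div 2) * pauli 1 $$ (p mod 2, q mod 2))
  + complex_of_real (t 2) * (pauli 2 $$ (p div 2, q div 2) * pauli 2 $$ (p mod 2, q mod 2))
  + complex_of_real (t 3) * (pauli 3 $$ (p div 2, q div 2) * pauli 3 $$ (p mod 2, q mod 2)))"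
  using assms unfolding rho_AB_def by (simp add: kron_def)


lemmas ents = pauli1 pauli2 pauli3 ds_entries I2_entries proj_entries

definition sgn_k :: "nat \<Rightarrow> real" where "sgn_k k = (if k = 0 then 1 else -1)"

lemma proj_ents: 
  "proj_B n k $$ (0,0) = (1 + complex_of_real (sgn_k k) * complex_of_real (n 3))/2"
  "proj_B n k $$ (0,1) = complex_of_real (sgn_k k) * (complex_of_real (n 1) - \<i> * complex_of_real (n 2))/2"
  "proj_B n k $$ (1,0) = complex_of_real (sgn_k k) * (complex_of_real (n 1) + \<i> * complex_of_real (n 2))/2"
  "proj_B n k $$ (1,1) = (1 - complex_of_real (sgn_k k) * complex_of_real (n 3))/2"
  by (simp_all only: proj_entries sgn_k_def) (simp_all split: if_splits)

lemma proj_ents1: 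
  "proj_B n k $$ (0,Suc 0) = complex_of_real (sgn_k k) * (complex_of_real (n (Suc 0)) - \<i> * complex_of_real (n 2))/2"
  "proj_B n k $$ (Suc 0,0) = complex_of_real (sgn_k k) * (complex_of_real (n (Suc 0)) + \<i> * complex_of_real (n 2))/2"
  "proj_B n k $$ (Suc 0,Suc 0) = (1 - complex_of_real (sgn_k k) * complex_of_real (n 3))/2"
  using proj_ents[of n k] by simp_all

lemmas ents2 = pauli1[simplified] pauli2[simplified] pauli3[simplified] ds_entries[simplified] I2_entries[simplified] proj_ents proj_ents1

lemma dot3_eq: "dot3 a b = a 1 * b 1 + a 2 * b 2 + a 3 * b 3"
  by (simp add: dot3_def eval_nat_numeral)

definition Aq :: "(nat \<Rightarrow> real) \<Rightarrow> (nat \<Rightarrow> real) \<Rightarrow> nat \<Rightarrow> real" where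
  "Aq y n k = 1 + sgn_k k * dot3 y n"
definition wq :: "(nat \<Rightarrow> real) \<Rightarrow> (nat \<Rightarrow> real) \<Rightarrow> (nat \<Rightarrow> real) \<Rightarrow> nat \<Rightarrow> nat \<Rightarrow> real" where
  "wq x t n k i = x i + sgn_k k * t i * n i"

lemma ptr_ents: assumes "n \<in> unit3"
  shows "ptrace_B (post_meas (rho_AB x y t) n k) $$ (0,0) = 
    1/4 * complex_of_real (Aq y n k + wq x t n k 3)"
   "ptrace_B (post_meas (rho_AB x y t) n k) $$ (0,1) = 
    1/4 * (complex_of_real (wq x t n k 1) - \<i> * complex_of_real (wq x t n k 2))"
   "ptrace_B (post_meas (rho_AB x y t) n k) $$ (1,0) = 
    1/4 * (complex_of_real (wq x t n k 1) + \<i> * complex_of_real (wq x t n k 2))"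
   "ptrace_B (post_meas (rho_AB x y t) n k) $$ (1,1) = 
    1/4 * complex_of_real (Aq y n k - wq x t n k 3)"
  unfolding Aq_def wq_def
  by (subst ptr_rho[OF assms], simp, simp, simp only: sum2,
      simp add: rho_entry ents2 dot3_eq[simplified], simp add: complex_eq_iff, simp add: field_simps)+


lemma sum4_split: "(\<Sum>p<4::nat. f p) = (\<Sum>i<2::nat. \<Sum>b<2::nat. f (2*i+b))"
  by (simp add: sum4 sum2 add.assoc)

lemma proj_herm: "cnj (proj_B n k $$ (a,b)) = proj_B n k $$ (b,a)" if "a < 2" "b < 2" for a b
proof -
  have "(a = 0 \<or> a = 1) \<and> (b = 0 \<or> b = 1)" using that by auto
  then show ?thesis by (elim conjE disjE) (simp_all add: proj_ents proj_ents1)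
qed

lemma psd_Q: assumes psd: "psd (rho_AB x y t)" and n: "n \<in> unit3"
  shows "0 \<le> Re (\<Sum>i<2. \<Sum>j<2. cnj (u i) * ptrace_B (post_meas (rho_AB x y t) n k) $$ (i,j) * u j)"
proof -
  let ?R = "rho_AB x y t" let ?P = "proj_B n k"
  define V where "V c p = u (p div 2) * ?P $$ (p mod 2, c)" for c p
  have pp: "(\<Sum>c<2. cnj (?P $$ (b,c)) * ?P $$ (b',c)) = ?P $$ (b',b)" if "b<2" "b'<2" for b b'
  proof -
    have "(\<Sum>c<2. cnj (?P $$ (b,c)) * ?P $$ (b',c)) = (\<Sum>c<2. ?P $$ (b',c) * ?P $$ (c,b))"
      using that by (intro sum.cong refl) (simp add: proj_herm mult.commute)
    also have "... = (?P * ?P) $$ (b',b)" using that by (simp add: scalar_prod_def lessThan_atLeast0)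
    also have "... = ?P $$ (b',b)" using proj_idem[OF n] by simp
    finally show ?thesis .
  qed
  have d: "dim_row ?R = 4" "dim_col ?R = 4" using carrier_matD[OF rho_carrier] by auto
  have q: "0 \<le> Re (\<Sum>p<4. \<Sum>q<4. cnj (V c p) * ?R $$ (p,q) * V c q)" for c
    using spec[OF psd[unfolded psd_def], of "V c"] d by simp
  have "(\<Sum>c<2. (\<Sum>p<4. \<Sum>q<4. cnj (V c p) * ?R $$ (p,q) * V c q))
     = (\<Sum>i<2. \<Sum>b<2. \<Sum>j<2. \<Sum>b'<2. cnj (u i) * ?R $$ (2*i+b,2*j+b') * u j *
           (\<Sum>c<2. cnj (?P $$ (b,c)) * ?P $$ (b',c)))"
    unfolding V_def sum4_split by (simp add: sum2 algebra_simps)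
  also have "... = (\<Sum>i<2. \<Sum>b<2. \<Sum>j<2. \<Sum>b'<2. cnj (u i) * ?R $$ (2*i+b,2*j+b') * u j * ?P $$ (b',b))"
    by (intro sum.cong refl) (simp add: pp)
  also have "... = (\<Sum>i<2. \<Sum>j<2. cnj (u i) * ptrace_B (post_meas ?R n k) $$ (i,j) * u j)"
    using ptr_rho[OF n, of 0 0] ptr_rho[OF n, of 0 1] ptr_rho[OF n, of 1 0] ptr_rho[OF n, of 1 1]
    by (simp add: sum2 algebra_simps)
  finally have e: "(\<Sum>i<2. \<Sum>j<2. cnj (u i) * ptrace_B (post_meas ?R n k) $$ (i,j) * u j)
     = (\<Sum>c<2. (\<Sum>p<4. \<Sum>q<4. cnj (V c p) * ?R $$ (p,q) * V c q))" ..
  show ?thesis unfolding e using q by (simp add: sum2)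
qed


lemma quad2:
  fixes A w1 w2 w3 :: real
  assumes h: "\<And>u0 u1. 0 \<le> Re (cnj u0 * complex_of_real (A+w3) * u0 + cnj u0 * (complex_of_real w1 - \<i> * complex_of_real w2) * u1
      + cnj u1 * (complex_of_real w1 + \<i> * complex_of_real w2) * u0 + cnj u1 * complex_of_real (A-w3) * u1)"
  shows "sqrt (w1^2 + w2^2 + w3^2) \<le> A"
proof -
  define N where "N = sqrt (w1^2 + w2^2 + w3^2)"
  have N2: "N^2 = w1^2 + w2^2 + w3^2" unfolding N_def by simp
  have s12: "w1^2+w2^2 = N^2 - w3^2" using N2 by simp
  have N0: "N \<ge> 0" unfolding N_def by simp
  have w3N: "\<bar>w3\<bar> \<le> N" unfolding N_def by (rule real_le_rsqrt) (simp)
  have "N \<le> A"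
  proof (cases "N + w3 = 0")
    case True
    have "0 \<le> A + w3" using h[of 1 0] by simp
    then show ?thesis using True by simp
  next
    case False
    then have pos: "N + w3 > 0" using w3N by simp
    have "0 \<le> (A+w3)*(w1^2+w2^2) - 2*(N+w3)*(w1^2+w2^2) + (A-w3)*(N+w3)^2"
      using h[of "complex_of_real w1 - \<i> * complex_of_real w2" "- complex_of_real (N + w3)"]
      by (simp add: algebra_simps power2_eq_square)
    also have "(A+w3)*(w1^2+w2^2) - 2*(N+w3)*(w1^2+w2^2) + (A-w3)*(N+w3)^2 = (N+w3) * (2*N*(A-N))"
      unfolding s12 by (simp add: algebra_simps power2_eq_square)
    finally have "0 \<le> (N+w3) * (2*N*(A-N))" .
    then have "0 \<le> 2*N*(A-N)" using pos by (simp add: zero_le_mult_iff)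
    moreover have "N > 0" using pos w3N by simp
    ultimately show ?thesis by (simp add: zero_le_mult_iff)
  qed
  then show ?thesis by (simp add: N_def)
qed

lemma psd_bound: assumes psd: "psd (rho_AB x y t)" and n: "n \<in> unit3"
  shows "sqrt ((wq x t n k 1)^2 + (wq x t n k 2)^2 + (wq x t n k 3)^2) \<le> Aq y n k"
proof (rule quad2)
  fix u0 u1 :: complex
  let ?u = "\<lambda>i::nat. if i = 0 then u0 else u1"
  let ?A = "Aq y n k" let ?w = "wq x t n k"
  have "(\<Sum>i<2. \<Sum>j<2. cnj (?u i) * ptrace_B (post_meas (rho_AB x y t) n k) $$ (i,j) * ?u j)
    = 1/4 * (cnj u0 * complex_of_real (?A + ?w 3) * u0 + cnj u0 * (complex_of_real (?w 1) - \<i> * complex_of_real (?w 2)) * u1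
      + cnj u1 * (complex_of_real (?w 1) + \<i> * complex_of_real (?w 2)) * u0 + cnj u1 * complex_of_real (?A - ?w 3) * u1)"
      (is "_ = 1/4 * ?F")
    apply (simp only: sum2 ptr_ents[OF n])
    apply (simp add: algebra_simps)
    done
  then have "0 \<le> Re (1/4 * ?F)" using psd_Q[OF psd n, of ?u k] by (simp only:)
  then show "0 \<le> Re (cnj u0 * complex_of_real (?A + ?w 3) * u0 + cnj u0 * (complex_of_real (?w 1) - \<i> * complex_of_real (?w 2)) * u1
      + cnj u1 * (complex_of_real (?w 1) + \<i> * complex_of_real (?w 2)) * u0 + cnj u1 * complex_of_real (?A - ?w 3) * u1)"
    by simp
qed


lemma det2: assumes "(A :: 'a :: comm_ring_1 mat) \<in> carrier_mat 2 2"
  shows "det A = A$$(0,0)*A$$(1,1) - A$$(0,1)*A$$(1,0)"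
proof -
  have "det A = (\<Sum>i<2. A $$ (i,0) * cofactor A i 0)"
    by (rule laplace_expansion_column[OF assms]) simp
  also have "... = A$$(0,0) * cofactor A 0 0 + A$$(1,0) * cofactor A 1 0"
    by (simp add: numeral_2_eq_2)
  also have "cofactor A 0 0 = A$$(1,1)"
    unfolding cofactor_def using assms
    by (subst det_single[of _]) (auto simp: mat_delete_def)
  also have "cofactor A 1 0 = - A$$(0,1)"
    unfolding cofactor_def using assms
    by (subst det_single[of _]) (auto simp: mat_delete_def)
  finally show ?thesis by (simp add: algebra_simps)
qed

lemma char_poly2: assumes A: "(A :: complex mat) \<in> carrier_mat 2 2"
  and tr: "A$$(0,0) + A$$(1,1) = l1 + l2" and dt: "A$$(0,0)*A$$(1,1) - A$$(0,1)*A$$(1,0) = l1 * l2"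
  shows "char_poly A = [:-l1,1:] * [:-l2,1:]"
proof -
  have "char_poly A = ([:0,1:] + [:-A$$(0,0):]) * ([:0,1:] + [:-A$$(1,1):]) - [:-A$$(0,1):] * [:-A$$(1,0):]"
    unfolding char_poly_def
    by (subst det2) (use A in \<open>auto simp: char_poly_matrix_def\<close>)
  also have "... = [: A$$(0,0)*A$$(1,1) - A$$(0,1)*A$$(1,0), -(A$$(0,0) + A$$(1,1)), 1:]"
    by (simp add: algebra_simps)
  also have "... = [:-l1,1:] * [:-l2,1:]"
    using tr dt by (simp add: algebra_simps)
  finally show ?thesis .
qed

lemma entropy2: assumes A: "(A :: complex mat) \<in> carrier_mat 2 2"
  and tr: "A$$(0,0) + A$$(1,1) = l1 + l2" and dt: "A$$(0,0)*A$$(1,1) - A$$(0,1)*A$$(1,0) = l1 * l2"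
  shows "vN_entropy A = - eta (Re l1) - eta (Re l2)"
  unfolding vN_entropy_def char_poly2[OF assms]
  by (subst proots_mult) auto


lemma ptrace_carrier[simp]: "ptrace_B M \<in> carrier_mat 2 2"
  unfolding ptrace_B_def by simp

lemma ptrace_dims[simp]: "dim_row (ptrace_B M) = 2" "dim_col (ptrace_B M) = 2"
  unfolding ptrace_B_def by simp_all

lemma post_dims[simp]: "dim_row (post_meas (rho_AB x y t) n k) = 4"
  using carrier_matD[OF post_carrier] by simp

lemma meas_prob_eq: assumes n: "n \<in> unit3"
  shows "meas_prob (rho_AB x y t) n k = Aq y n k / 2"
proof -
  let ?P = "post_meas (rho_AB x y t) n k"
  have "mtrace ?P = ptrace_B ?P $$ (0,0) + ptrace_B ?P $$ (1,1)"
    unfolding mtrace_def ptrace_B_def by (simp add: sum4 add.assoc)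
  also have "... = complex_of_real (Aq y n k / 2)"
    by (simp only: ptr_ents[OF n]) (simp add: field_simps)
  finally show ?thesis unfolding meas_prob_def by (simp only: Re_complex_of_real)
qed

lemma cnj_prod: "(complex_of_real b - \<i> * complex_of_real c) * (complex_of_real b + \<i> * complex_of_real c) = complex_of_real (b^2 + c^2)"
  by (simp add: complex_eq_iff power2_eq_square)

lemma vN_cond: assumes n: "n \<in> unit3" and A: "Aq y n k \<noteq> 0"
  shows "vN_entropy (cond_state_A (rho_AB x y t) n k) =
     - eta ((1 + sqrt ((wq x t n k 1)^2 + (wq x t n k 2)^2 + (wq x t n k 3)^2) / Aq y n k)/2)
     - eta ((1 - sqrt ((wq x t n k 1)^2 + (wq x t n k 2)^2 + (wq x t n k 3)^2) / Aq y n k)/2)"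
proof -
  define a where "a = Aq y n k"
  define w where "w = wq x t n k"
  define N where "N = sqrt ((w 1)^2 + (w 2)^2 + (w 3)^2)"
  have N2: "N^2 = (w 1)^2 + (w 2)^2 + (w 3)^2" unfolding N_def by simp
  have a0: "a \<noteq> 0" using A a_def by simp
  let ?C = "cond_state_A (rho_AB x y t) n k"
  let ?Q = "ptrace_B (post_meas (rho_AB x y t) n k)"
  have C: "?C = (1 / complex_of_real (a/2)) \<cdot>\<^sub>m ?Q"
    unfolding cond_state_A_def meas_prob_eq[OF n] a_def ..
  have gen: "?C $$ (i,j) = 1 / complex_of_real (a/2) * ?Q $$ (i,j)" if "i < 2" "j < 2" for i j
    unfolding C using that by simp
  have Cc: "?C \<in> carrier_mat 2 2" unfolding C by simp
  have c00: "?C $$ (0,0) = complex_of_real ((a + w 3)/(2*a))"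
    using a0 by (simp only: gen[of 0 0] gen[of 0 1] gen[of 1 0] gen[of 1 1] zero_less_numeral one_less_numeral_iff semiring_norm(76) ptr_ents[OF n] a_def[symmetric] w_def[symmetric]) (simp add: field_simps)
  have c11: "?C $$ (1,1) = complex_of_real ((a - w 3)/(2*a))"
    using a0 by (simp only: gen[of 0 0] gen[of 0 1] gen[of 1 0] gen[of 1 1] zero_less_numeral one_less_numeral_iff semiring_norm(76) ptr_ents[OF n] a_def[symmetric] w_def[symmetric]) (simp add: field_simps)
  have c01: "?C $$ (0,1) = (complex_of_real (w 1/(2*a)) - \<i> * complex_of_real (w 2/(2*a)))"
    using a0 by (simp only: gen[of 0 0] gen[of 0 1] gen[of 1 0] gen[of 1 1] zero_less_numeral one_less_numeral_iff semiring_norm(76) ptr_ents[OF n] a_def[symmetric] w_def[symmetric]) (simp add: field_simps)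
  have c10: "?C $$ (1,0) = (complex_of_real (w 1/(2*a)) + \<i> * complex_of_real (w 2/(2*a)))"
    using a0 by (simp only: gen[of 0 0] gen[of 0 1] gen[of 1 0] gen[of 1 1] zero_less_numeral one_less_numeral_iff semiring_norm(76) ptr_ents[OF n] a_def[symmetric] w_def[symmetric]) (simp add: field_simps)
  have tr: "?C $$ (0,0) + ?C $$ (1,1) = complex_of_real ((1 + N/a)/2) + complex_of_real ((1 - N/a)/2)"
    unfolding c00 c11 using a0 by (simp add: field_simps flip: of_real_add)
  have "?C $$ (0,0) * ?C $$ (1,1) - ?C $$ (0,1) * ?C $$ (1,0) =
        complex_of_real ((a + w 3)/(2*a) * ((a - w 3)/(2*a)) - ((w 1/(2*a))^2 + (w 2/(2*a))^2))"
    unfolding c00 c11 c01 c10 cnj_prod by simp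
  also have "(a + w 3)/(2*a) * ((a - w 3)/(2*a)) - ((w 1/(2*a))^2 + (w 2/(2*a))^2) = (1 + N/a)/2 * ((1 - N/a)/2)"
    using a0 N2 by (simp add: field_simps power2_eq_square)
  finally have dt: "?C $$ (0,0) * ?C $$ (1,1) - ?C $$ (0,1) * ?C $$ (1,0) =
      complex_of_real ((1 + N/a)/2) * complex_of_real ((1 - N/a)/2)" by simp
  show ?thesis using entropy2[OF Cc tr dt] unfolding N_def a_def w_def by simp
qed


lemma sum13: "(\<Sum>i\<in>{1..3::nat}. f i) = f 1 + f 2 + (f 3 :: real)"
  by (simp add: eval_nat_numeral add.assoc)

lemma norm3p: "norm (p :: real \<times> real \<times> real) = sqrt ((fst p)^2 + (fst (snd p))^2 + (snd (snd p))^2)"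
  by (cases p) (simp add: norm_Pair add.assoc)

lemma exists_orth3:
  fixes U Y :: "real \<times> real \<times> real"
  shows "\<exists>z. z \<noteq> 0 \<and> inner z U = 0 \<and> inner z Y = 0"
proof -
  have "dim {U, Y} \<le> card {U, Y}" by (rule dim_le_card) (auto intro: span_base)
  also have "card {U, Y} \<le> 2" by (simp add: card_insert_if)
  finally have "dim {U, Y} < DIM(real \<times> real \<times> real)" by simp
  then obtain z where "z \<noteq> 0" "\<And>w. w \<in> span {U, Y} \<Longrightarrow> real_inner_class.orthogonal z w"
    by (rule orthogonal_to_subspace_exists, blast)
  moreover have "U \<in> span {U, Y}" "Y \<in> span {U, Y}" by (auto intro: span_base)
  ultimately show ?thesis unfolding real_inner_class.orthogonal_def by blast
qed

lemma t0_attained: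
  "\<exists>e \<in> {e \<in> unit3. dot3 e (\<lambda>i. t i * x i) = 0 \<and> dot3 e y = 0}.
      (\<Sum>i\<in>{1..3}. (t i)^2 * (e i)^2) = t0_sq x y t"
proof -
  define E where "E = {e \<in> unit3. dot3 e (\<lambda>i. t i * x i) = 0 \<and> dot3 e y = 0}"
  define F where "F e = (\<Sum>i\<in>{1..3::nat}. (t i)^2 * (e i)^2)" for e :: "nat \<Rightarrow> real"
  define u where "u i = t i * x i" for i
  define K where "K = {p :: real \<times> real \<times> real. (fst p)^2 + (fst (snd p))^2 + (snd (snd p))^2 = 1 \<and>
     u 1 * fst p + u 2 * fst (snd p) + u 3 * snd (snd p) = 0 \<and>
     y 1 * fst p + y 2 * fst (snd p) + y 3 * snd (snd p) = 0}"
  define g where "g p = (t 1)^2 * (fst p)^2 + (t 2)^2 * (fst (snd p))^2 + (t 3)^2 * (snd (snd p))^2"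
    for p :: "real \<times> real \<times> real"
  define emb where "emb p = (\<lambda>i::nat. if i = 1 then fst p else if i = 2 then fst (snd p) else snd (snd p))"
    for p :: "real \<times> real \<times> real"
  have img: "F ` E = g ` K"
  proof
    show "F ` E \<subseteq> g ` K"
    proof
      fix v assume "v \<in> F ` E"
      then obtain e where e: "e \<in> E" "v = F e" by auto
      have "(e 1, e 2, e 3) \<in> K" "F e = g (e 1, e 2, e 3)"
        using e unfolding E_def K_def unit3_def dot3_def F_def g_def u_def sum13 by (simp_all add: sum13 mult.commute)
      then show "v \<in> g ` K" using e by auto
    qed
    show "g ` K \<subseteq> F ` E"
    proof
      fix v assume "v \<in> g ` K"
      then obtain p where p: "p \<in> K" "v = g p" by auto
      have "emb p \<in> E" "F (emb p) = g p"
        using p unfolding E_def K_def unit3_def dot3_def F_def g_def u_def emb_def sum13 by (simp_all add: sum13 mult.commute)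
      then show "v \<in> F ` E" using p by (metis image_eqI)
    qed
  qed
  have cK: "compact K"
  proof (subst compact_eq_bounded_closed, intro conjI)
    show "bounded K"
    proof (rule bounded_subset[OF bounded_cball[of 0 1]])
      show "K \<subseteq> cball 0 1"
      proof
        fix p assume "p \<in> K"
        then have "norm p = 1" unfolding K_def norm3p by simp
        then show "p \<in> cball 0 1" by simp
      qed
    qed
    show "closed K" unfolding K_def
      by (intro closed_Collect_conj closed_Collect_eq continuous_intros)
  qed
  have neK: "K \<noteq> {}"
  proof -
    obtain z :: "real \<times> real \<times> real" where z: "z \<noteq> 0" "inner z (u 1, u 2, u 3) = 0" "inner z (y 1, y 2, y 3) = 0"
      using exists_orth3 by blast
    define p where "p = z /\<^sub>R norm z"
    have nz: "norm z > 0" using z by simp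
    have "norm p = 1" unfolding p_def using nz by simp
    then have "(fst p)^2 + (fst (snd p))^2 + (snd (snd p))^2 = 1"
      unfolding norm3p by simp
    moreover have "inner p (u 1, u 2, u 3) = 0" "inner p (y 1, y 2, y 3) = 0"
      unfolding p_def using z by simp_all
    ultimately have "p \<in> K" unfolding K_def
      by (cases p) (auto simp: algebra_simps)
    then show ?thesis by auto
  qed
  have "continuous_on K g" unfolding g_def by (intro continuous_intros)
  then obtain p where p: "p \<in> K" "\<And>q. q \<in> K \<Longrightarrow> g q \<le> g p"
    using continuous_attains_sup[OF cK neK] by blast
  have "Sup (g ` K) = g p" using p by (intro cSup_eq_maximum) auto
  then have "t0_sq x y t = g p" unfolding t0_sq_def E_def[symmetric] F_def[symmetric] img .
  moreover have "g p \<in> F ` E" using img p by auto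
  ultimately show ?thesis unfolding E_def[symmetric] F_def[symmetric] by force
qed


lemma eta_nonpos: assumes "0 \<le> p" "p \<le> 1" shows "eta p \<le> 0"
proof (cases "p \<le> 0")
  case True then show ?thesis by (simp add: eta_def)
next
  case False
  then have "log 2 p \<le> 0" using assms by simp
  then show ?thesis using False by (simp add: eta_def mult_nonneg_nonpos)
qed

lemma term_nonneg: assumes psd: "psd (rho_AB x y t)" and n: "n \<in> unit3"
  shows "0 \<le> meas_prob (rho_AB x y t) n k * vN_entropy (cond_state_A (rho_AB x y t) n k)"
proof -
  define A where "A = Aq y n k"
  define N where "N = sqrt ((wq x t n k 1)^2 + (wq x t n k 2)^2 + (wq x t n k 3)^2)"
  have NA: "N \<le> A" using psd_bound[OF psd n, of k] unfolding N_def A_def .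
  have N0: "0 \<le> N" unfolding N_def by simp
  show ?thesis
  proof (cases "A = 0")
    case True
    then show ?thesis using meas_prob_eq[OF n, of x y t k] A_def by simp
  next
    case False
    then have Ap: "A > 0" using NA N0 by simp
    have q0: "0 \<le> N / A" "N / A \<le> 1" using Ap NA N0 by (simp_all add: divide_le_eq_1)
    have "vN_entropy (cond_state_A (rho_AB x y t) n k) = - eta ((1 + N/A)/2) - eta ((1 - N/A)/2)"
      using vN_cond[OF n, of y k x t] False unfolding A_def N_def by simp
    moreover have "eta ((1 + N/A)/2) \<le> 0" "eta ((1 - N/A)/2) \<le> 0"
      using q0 by (intro eta_nonpos; simp)+
    ultimately have "0 \<le> vN_entropy (cond_state_A (rho_AB x y t) n k)" by simp
    moreover have "0 \<le> meas_prob (rho_AB x y t) n k" using meas_prob_eq[OF n, of x y t k] Ap A_def by simp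
    ultimately show ?thesis by simp
  qed
qed

lemma cond_nonneg: assumes psd: "psd (rho_AB x y t)" and n: "n \<in> unit3"
  shows "0 \<le> cond_entropy (rho_AB x y t) n"
  unfolding cond_entropy_def using term_nonneg[OF psd n, of 0] term_nonneg[OF psd n, of 1] by simp

lemma h2_eta: assumes "0 \<le> N" "N \<le> 1"
  shows "h2 ((1 + N)/2) = - eta ((1 + N)/2) - eta ((1 - N)/2)"
proof (cases "N = 1")
  case True then show ?thesis by (simp add: h2_def eta_def True)
next
  case False
  then have "(1 - N)/2 > 0" using assms by simp
  moreover have "(1 + N)/2 > 0" using assms by simp
  moreover have e: "1 - (1 + N)/2 = (1 - N)/2" by (simp add: field_simps)
  ultimately show ?thesis unfolding h2_def eta_def e by simp
qed

lemma cond_e0: assumes psd: "psd (rho_AB x y t)" and e: "e \<in> unit3" 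
  and o1: "dot3 e (\<lambda>i. t i * x i) = 0" and o2: "dot3 e y = 0"
  shows "cond_entropy (rho_AB x y t) e = 
     h2 ((1 + sqrt ((norm3 x)^2 + (\<Sum>i\<in>{1..3}. (t i)^2 * (e i)^2))) / 2)"
proof -
  define N where "N = sqrt ((norm3 x)^2 + (\<Sum>i\<in>{1..3}. (t i)^2 * (e i)^2))"
  have A1: "Aq y e k = 1" for k using o2 unfolding Aq_def dot3_def by (simp add: mult.commute)
  have s2: "sgn_k k * sgn_k k = 1" for k by (simp add: sgn_k_def)
  have nx: "(norm3 x)^2 = (x 1)^2 + (x 2)^2 + (x 3)^2"
    unfolding norm3_def sum13 by simp
  have Nw: "sqrt ((wq x t e k 1)^2 + (wq x t e k 2)^2 + (wq x t e k 3)^2) = N" for k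
  proof -
    have "(wq x t e k 1)^2 + (wq x t e k 2)^2 + (wq x t e k 3)^2 =
       (x 1)^2 + (x 2)^2 + (x 3)^2 + (sgn_k k * sgn_k k) * ((t 1)^2 * (e 1)^2 + (t 2)^2 * (e 2)^2 + (t 3)^2 * (e 3)^2)
       + 2 * sgn_k k * (e 1 * (t 1 * x 1) + e 2 * (t 2 * x 2) + e 3 * (t 3 * x 3))"
      unfolding wq_def by (simp add: algebra_simps power2_eq_square)
    also have "... = (norm3 x)^2 + (\<Sum>i\<in>{1..3}. (t i)^2 * (e i)^2)"
      using o1 unfolding s2 nx dot3_def sum13 by simp
    finally show ?thesis unfolding N_def by simp
  qed
  have N1: "N \<le> 1" using psd_bound[OF psd e, of 0] unfolding Nw A1 .
  have N0: "0 \<le> N" unfolding N_def sum13 by simp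
  have vk: "vN_entropy (cond_state_A (rho_AB x y t) e k) = - eta ((1 + N)/2) - eta ((1 - N)/2)" for k
    using vN_cond[OF e, of y k x t] unfolding A1 Nw by simp
  have mk: "meas_prob (rho_AB x y t) e k = 1/2" for k
    using meas_prob_eq[OF e, of x y t k] unfolding A1 by simp
  have "cond_entropy (rho_AB x y t) e = - eta ((1 + N)/2) - eta ((1 - N)/2)"
    unfolding cond_entropy_def by (simp add: vk mk)
  also have "... = h2 ((1 + N)/2)" using h2_eta[OF N0 N1] by simp
  finally show ?thesis unfolding N_def .
qed

theorem theorem1:
  fixes x y t :: "nat \<Rightarrow> real"
  assumes "psd (rho_AB x y t)"
  shows "(INF n\<in>unit3. cond_entropy (rho_AB x y t) n)
           \<le> h2 ((1 + sqrt ((norm3 x)^2 + t0_sq x y t)) / 2)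
       \<and> classical_corr (rho_AB x y t)
           \<ge> vN_entropy (ptrace_B (rho_AB x y t)) - h2 ((1 + sqrt ((norm3 x)^2 + t0_sq x y t)) / 2)
       \<and> discord (rho_AB x y t)
           \<le> vN_entropy (ptrace_A (rho_AB x y t)) - vN_entropy (rho_AB x y t)
              + h2 ((1 + sqrt ((norm3 x)^2 + t0_sq x y t)) / 2)"
proof -
  let ?R = "rho_AB x y t"
  let ?H = "h2 ((1 + sqrt ((norm3 x)^2 + t0_sq x y t)) / 2)"
  obtain e where e: "e \<in> unit3" "dot3 e (\<lambda>i. t i * x i) = 0" "dot3 e y = 0"
    and fe: "(\<Sum>i\<in>{1..3}. (t i)^2 * (e i)^2) = t0_sq x y t"
    using t0_attained[of t x y] by blast
  have ce: "cond_entropy ?R e = ?H"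
    using cond_e0[OF assms e] unfolding fe .
  have bb: "bdd_below ((\<lambda>n. cond_entropy ?R n) ` unit3)"
    using cond_nonneg[OF assms] by (intro bdd_belowI[of _ 0]) auto
  have p1: "(INF n\<in>unit3. cond_entropy ?R n) \<le> ?H"
    using cINF_lower[OF bb e(1)] ce by simp
  have ba: "bdd_above ((\<lambda>n. vN_entropy (ptrace_B ?R) - cond_entropy ?R n) ` unit3)"
    using cond_nonneg[OF assms] by (intro bdd_aboveI[of _ "vN_entropy (ptrace_B ?R)"]) auto
  have p2: "classical_corr ?R \<ge> vN_entropy (ptrace_B ?R) - ?H"
    unfolding classical_corr_def using cSUP_upper[OF e(1) ba] ce by simp
  have p3: "discord ?R \<le> vN_entropy (ptrace_A ?R) - vN_entropy ?R + ?H"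
    using p2 unfolding discord_def mutual_info_def by simp
  show ?thesis using p1 p2 p3 by blast
qed


end
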